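(* Let $q \in \mathbb{Z}_{\geqslant 1}$. For any real $x \geqslant 1$, $$\sum_{\substack{n \leqslant x \\ q \mid n}} \mu(n) \sum_{\substack{k \leqslant x/n \\ k \mid n^\infty}} 1 = \sum_{\substack{n \leqslant x \\ q \mid \gamma(n)}} (-1)^{\omega(n)}.$$
   Context: $\mu$ is the Möbius function, $\omega(n)$ the number of distinct prime factors of $n$, $\gamma(n) := \prod_{p \mid n} p$ the squarefree kernel of $n$, and $k \mid n^\infty$ means that every prime factor of $k$ is a prime factor of $n$. Sums run over positive integers. *)

theory Defs
  imports "HOL-Analysis.Analysis" "HOL-Computational_Algebra.Squarefree"
begin

definition moebius_mu :: "nat \<Rightarrow> int" where
  "moebius_mu n = (if n = 0 then 0 else if squarefree n then (-1) ^ card (prime_factors n) else 0)"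

definition omega :: "nat \<Rightarrow> nat" where
  "omega n = card (prime_factors n)"

definition rad :: "nat \<Rightarrow> nat" where
  "rad n = (\<Prod>p\<in>prime_factors n. p)"

text \<open>k divides n to the infinity: every prime factor of k divides n.\<close>
definition dvd_inf :: "nat \<Rightarrow> nat \<Rightarrow> bool" where
  "dvd_inf k n \<longleftrightarrow> (\<forall>p. prime p \<longrightarrow> p dvd k \<longrightarrow> p dvd n)"

end

theory Submission
  imports Defs
begin

lemma pf_rad: "m > 0 \<Longrightarrow> prime_factors (rad m) = prime_factors (m::nat)"
proof -
  assume "m > 0"
  have "prime_factors (rad m) = \<Union>((prime_factors \<circ> id) ` prime_factors m)"
    unfolding rad_def using prime_factors_prod[of "prime_factors m" id]
    by (auto dest: in_prime_factors_imp_prime)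
  also have "\<dots> = prime_factors m"
  proof -
    have "\<And>p. p \<in> prime_factors m \<Longrightarrow> prime_factors p = {p}"
      by (metis in_prime_factors_imp_prime prime_prime_factors)
    then have "(prime_factors \<circ> id) ` prime_factors m = (\<lambda>p. {p}) ` prime_factors m"
      by (intro image_cong) auto
    then show ?thesis by simp
  qed
  finally show ?thesis .
qed

lemma rad_pos: "rad (m::nat) > 0"
  unfolding rad_def by (auto intro!: prod_pos dest: in_prime_factors_imp_prime prime_gt_0_nat)

lemma sqf_rad: "squarefree (rad (m::nat))"
  unfolding rad_def
  by (rule squarefree_prod_coprime)
     (auto dest: in_prime_factors_imp_prime intro: primes_coprime squarefree_prime)

lemma rad_dvd: "m > 0 \<Longrightarrow> rad (m::nat) dvd m"
proof -
  assume m: "m > 0"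
  have "rad m = (\<Prod>p\<in>prime_factors m. p ^ 1)" unfolding rad_def by simp
  also have "\<dots> dvd (\<Prod>p\<in>prime_factors m. p ^ multiplicity p m)"
    by (intro prod_dvd_prod le_imp_power_dvd)
       (auto simp: prime_factors_multiplicity Suc_le_eq)
  also have "\<dots> = m" using m by (simp add: prod_prime_factors)
  finally show ?thesis .
qed

lemma rad_sqf: "squarefree (n::nat) \<Longrightarrow> rad n = n"
proof -
  assume s: "squarefree n"
  then have n: "n \<noteq> 0" by (metis not_squarefree_0)
  have "n = (\<Prod>p\<in>prime_factors n. p ^ multiplicity p n)" using n by (simp add: prod_prime_factors)
  also have "\<dots> = (\<Prod>p\<in>prime_factors n. p)"
    using s n by (intro prod.cong) (auto simp: squarefree_factorial_semiring')
  finally show ?thesis unfolding rad_def by simp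
qed

lemma pf_mult_inf:
  assumes "n > 0" "k > 0" "dvd_inf k (n::nat)"
  shows "prime_factors (n * k) = prime_factors n"
  using assms by (auto simp: prime_factors_product prime_factors_dvd dvd_inf_def prime_dvd_mult_iff)

lemma dvd_inf_rad:
  assumes "m > 0"
  shows "dvd_inf (m div rad m) (rad (m::nat))"
  unfolding dvd_inf_def
proof (intro allI impI)
  fix p :: nat assume p: "prime p" "p dvd m div rad m"
  then have "p dvd m" using rad_dvd[OF assms] by (metis dvd_div_mult_self dvd_mult2)
  then have "p \<in> prime_factors (rad m)" using p assms by (simp add: pf_rad prime_factors_dvd)
  then show "p dvd rad m" by (simp add: in_prime_factors_imp_dvd)
qed


theorem lemma3p2:
  fixes q :: nat and x :: real
  assumes "q \<ge> 1" and "x \<ge> 1"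
  shows "(\<Sum>n\<in>{n. 1 \<le> n \<and> real n \<le> x \<and> q dvd n}.
            moebius_mu n * int (card {k. 1 \<le> k \<and> real k \<le> x / real n \<and> dvd_inf k n}))
       = (\<Sum>n\<in>{n. 1 \<le> n \<and> real n \<le> x \<and> q dvd rad n}. (-1::int) ^ omega n)"
proof -
  define A where "A = {n. 1 \<le> n \<and> real n \<le> x \<and> q dvd n}"
  define A' where "A' = {n. 1 \<le> n \<and> real n \<le> x \<and> q dvd n \<and> squarefree n}"
  define K where "K = (\<lambda>n. {k. 1 \<le> k \<and> real k \<le> x / real n \<and> dvd_inf k n})"
  define B where "B = {n. 1 \<le> n \<and> real n \<le> x \<and> q dvd rad n}"
  have finA: "finite A"
    by (rule finite_subset[of _ "{..nat \<lfloor>x\<rfloor>}"]) (auto simp: A_def le_nat_floor)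
  have finA': "finite A'"
    by (rule finite_subset[of _ "{..nat \<lfloor>x\<rfloor>}"]) (auto simp: A'_def le_nat_floor)
  have finK: "finite (K n)" for n
  proof (cases "n = 0")
    case True
    then show ?thesis by (simp add: K_def)
  next
    case False
    show ?thesis
    proof (rule finite_subset[of _ "{..nat \<lfloor>x\<rfloor>}"])
      show "K n \<subseteq> {..nat \<lfloor>x\<rfloor>}"
      proof
        fix k assume "k \<in> K n"
        then have k: "real k \<le> x / real n" by (simp add: K_def)
        have "x / real n \<le> x" using False assms(2)
          by (simp add: divide_le_eq)
        then show "k \<in> {..nat \<lfloor>x\<rfloor>}" using k by (simp add: le_nat_floor)
      qed
    qed simp
  qed
  have "(\<Sum>n\<in>A. moebius_mu n * int (card (K n))) = (\<Sum>n\<in>A'. moebius_mu n * int (card (K n)))"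
    by (rule sum.mono_neutral_right[OF finA]) (auto simp: A_def A'_def moebius_mu_def)
  also have "\<dots> = (\<Sum>n\<in>A'. \<Sum>k\<in>K n. (-1::int) ^ omega n)"
    by (intro sum.cong refl) (auto simp: A'_def moebius_mu_def omega_def)
  also have "\<dots> = (\<Sum>(n,k)\<in>Sigma A' K. (-1::int) ^ omega n)"
    by (rule sum.Sigma) (use finA' finK in auto)
  also have "\<dots> = (\<Sum>m\<in>B. (-1::int) ^ omega m)"
  proof (rule sum.reindex_bij_witness[where i = "\<lambda>m. (rad m, m div rad m)" and j = "\<lambda>(n,k). n * k"])
    fix a assume a: "a \<in> Sigma A' K"
    obtain n k where ak: "a = (n, k)" by (cases a)
    have n: "n \<ge> 1" "real n \<le> x" "q dvd n" "squarefree n" using a ak by (auto simp: A'_def)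
    have k: "k \<ge> 1" "real k \<le> x / real n" "dvd_inf k n" using a ak by (auto simp: K_def)
    have pf: "prime_factors (n * k) = prime_factors n" using n k by (intro pf_mult_inf) auto
    have rnk: "rad (n * k) = n" using pf rad_sqf[OF n(4)] by (simp add: rad_def)
    show "(case a of (n, k) \<Rightarrow> n * k) \<in> B"
    proof -
      have "real k * real n \<le> x" using k(2) n(1) by (simp add: le_divide_eq)
      then have "real (n * k) \<le> x" by (simp add: mult.commute)
      then show ?thesis using ak n k rnk by (simp add: B_def)
    qed
    show "(rad (case a of (n, k) \<Rightarrow> n * k), (case a of (n, k) \<Rightarrow> n * k) div rad (case a of (n, k) \<Rightarrow> n * k)) = a"
      using ak rnk n(1) by simp
    show "(-1::int) ^ omega (case a of (n, k) \<Rightarrow> n * k) = (case a of (n, k) \<Rightarrow> (-1) ^ omega n)"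
      using ak pf by (simp add: omega_def)
  next
    fix b assume b: "b \<in> B"
    then have b1: "b \<ge> 1" "real b \<le> x" "q dvd rad b" by (auto simp: B_def)
    have d: "rad b dvd b" using b1 by (intro rad_dvd) auto
    show "(case (rad b, b div rad b) of (n, k) \<Rightarrow> n * k) = b" using d by simp
    have rp: "rad b > 0" by (rule rad_pos)
    have kpos: "b div rad b \<ge> 1" using d b1 rp
      by (metis dvd_div_mult_self less_one mult_is_0 not_less not_one_le_zero)
    have rle: "rad b \<le> b" using d b1 by (intro dvd_imp_le) auto
    have "real (b div rad b) * real (rad b) = real b" using d by (metis dvd_div_mult_self of_nat_mult)
    then have "real (b div rad b) \<le> x / real (rad b)" using b1 rp by (simp add: le_divide_eq)
    then show "(rad b, b div rad b) \<in> Sigma A' K"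
      using b1 rp rle kpos dvd_inf_rad[of b] sqf_rad[of b]
      by (auto simp: A'_def K_def intro: order.trans[of _ "real b"])
  qed
  finally show ?thesis unfolding A_def K_def B_def .
qed

end
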